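(* Let $S$ be the set of all sequents and $M,\mathbb{B}_S,m$ as in the context. For each formula $A$ put $V(A):=(m(A\Rightarrow),\,M(\Rightarrow A))$. Then for every formula $A$, $m(A\Rightarrow)$ and $M(\Rightarrow A)$ belong to $\mathbb{B}_S$ and $m(A\Rightarrow)\subseteq M(\Rightarrow A)$, and $V$ is a semi ${\tt D}\mathbb{B}_S$-valuation.
   Context: ${\sf G}^{1}{\sf LC}^{cf}$ is the cut-free second-order sequent calculus (language without relation or function symbols; sequents $\Gamma\Rightarrow\Delta$ are pairs of finite sets of formulas; initial sequents $A,\Gamma\Rightarrow\Delta,A$ for atomic $A$; rules $(L\lnot)$ $\lnot F,\Gamma\Rightarrow\Delta,F$ / $\lnot F,\Gamma\Rightarrow\Delta$; $(R\lnot)$ $F,\Gamma\Rightarrow\Delta,\lnot F$ / $\Gamma\Rightarrow\Delta,\lnot F$; rules for $\lor,\land$ and first/second-order quantifiers in which the major formula is kept in the premise, with eigenvariables not in the conclusion for $(L\exists),(R\forall)$ and arbitrary terms $t$ / abstracts $T=\lambda\vec x.G$ as instances for $(R\exists),(L\forall)$). $Tm_0$, $Tm_1^{(n)}$: first-order terms and $n$-ary abstracts. For sequents, $M(\Gamma\Rightarrow\Delta):=\{(\Lambda\Rightarrow\Theta)\in S:{\sf G}^{1}{\sf LC}^{cf}\vdash\Gamma,\Lambda\Rightarrow\Delta,\Theta\}$; this $M:S\to\mathcal{P}(S)$ satisfies $x\in M(x)\iff M(x)=S$ and $x\in M(y)\iff y\in M(x)$. $\mathbb{B}_S:=\{\alpha\subseteq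 S:\alpha=\bigcap\{M(x):\alpha\subseteq M(x)\}\}$ (with $\bigcap\emptyset=S$), a complete Boolean algebra under inclusion with meets $\bigcap$, joins $\sup_\lambda\alpha_\lambda=\bigcap\{\gamma\in\mathbb{B}_S:\bigcup_\lambda\alpha_\lambda\subseteq\gamma\}$, and complement $-\alpha=\bigcap\{M(x):x\in\alpha\}$; $m(y):=\bigcap\{M(x):y\in M(x)\}$. For a cBa $\mathbb{B}$: ${\tt D}\mathbb{B}=\{(a,b):a\le b\}$, ${\tt a}=(\Box{\tt a},\Diamond{\tt a})$; ${\tt a}\unlhd{\tt b}$ iff $\Box{\tt a}\le\Box{\tt b}$ and $\Diamond{\tt a}\ge\Diamond{\tt b}$; $-{\tt a}=(-\Diamond{\tt a},-\Box{\tt a})$; $\sup_<,\inf_<$ componentwise. A semi ${\tt D}\mathbb{B}$-valuation is a map $V$ from formulas to ${\tt D}\mathbb{B}$ with $V(\lnot F)\unlhd-V(F)$, $V(F_0\lor F_1)\unlhd\sup_<\{V(F_0),V(F_1)\}$, $V(F_0\land F_1)\unlhd\inf_<\{V(F_0),V(F_1)\}$, $V(\exists xF(x))\unlhd\sup_<\{V(F(t)):t\in Tm_0\}$, $V(\forall xF(x))\unlhd\inf_<\{V(F(t)):t\in Tm_0\}$, $V(\exists X^nF(X))\unlhd\sup_<\{V(F(T)):T\in Tm_1^{(n)}\}$, $V(\forall X^nF(X))\unlhd\inf_<\{V(F(T)):T\in Tm_1^{(n)}\}$. *)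

theory Defs
  imports Main
begin

section \<open>Syntax: second-order language without relation or function symbols\<close>

text \<open>Locally nameless representation. First-order terms are free variables
  (named by nat) or bound variables (de Bruijn indices). Second-order variables are
  free (name, arity) or bound (de Bruijn index, separate index space).\<close>

datatype tm = FV nat | BV nat

datatype pv = PF nat nat | PB nat

datatype fm =
    FAtom pv "tm list"
  | FNeg fm
  | FOr fm fm
  | FAnd fm fm
  | FEx fm
  | FAll fm
  | FEx2 nat fm
  | FAll2 nat fm

fun tm_wf :: "nat \<Rightarrow> tm \<Rightarrow> bool" where
  "tm_wf k (FV a) = True"
| "tm_wf k (BV i) = (i < k)"

text \<open>wf k as F: F is well formed in a context of k first-order binders and
  second-order binders of arities as (innermost first).\<close>
fun wf :: "nat \<Rightarrow> nat list \<Rightarrow> fm \<Rightarrow> bool" where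
  "wf k as (FAtom (PF X n) ts) = (length ts = n \<and> (\<forall>t\<in>set ts. tm_wf k t))"
| "wf k as (FAtom (PB i) ts) = (i < length as \<and> length ts = as ! i \<and> (\<forall>t\<in>set ts. tm_wf k t))"
| "wf k as (FNeg F) = wf k as F"
| "wf k as (FOr F G) = (wf k as F \<and> wf k as G)"
| "wf k as (FAnd F G) = (wf k as F \<and> wf k as G)"
| "wf k as (FEx F) = wf (Suc k) as F"
| "wf k as (FAll F) = wf (Suc k) as F"
| "wf k as (FEx2 n F) = wf k (n # as) F"
| "wf k as (FAll2 n F) = wf k (n # as) F"

definition Fm :: "fm set" where
  "Fm = {F. wf 0 [] F}"

definition Tm0 :: "tm set" where
  "Tm0 = range FV"

text \<open>n-ary abstracts Tm_1^(n): \<lambda>x_1..x_n. G is represented by its body G, in which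
  x_(j+1) is the bound index j.\<close>
definition Abs :: "nat \<Rightarrow> fm set" where
  "Abs n = {G. wf n [] G}"

fun is_atom :: "fm \<Rightarrow> bool" where
  "is_atom (FAtom p ts) = True"
| "is_atom _ = False"

fun open_tm :: "nat \<Rightarrow> tm \<Rightarrow> tm \<Rightarrow> tm" where
  "open_tm k t (BV i) = (if i = k then t else BV i)"
| "open_tm k t (FV a) = FV a"

fun open1 :: "nat \<Rightarrow> tm \<Rightarrow> fm \<Rightarrow> fm" where
  "open1 k t (FAtom p ts) = FAtom p (map (open_tm k t) ts)"
| "open1 k t (FNeg F) = FNeg (open1 k t F)"
| "open1 k t (FOr F G) = FOr (open1 k t F) (open1 k t G)"
| "open1 k t (FAnd F G) = FAnd (open1 k t F) (open1 k t G)"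
| "open1 k t (FEx F) = FEx (open1 (Suc k) t F)"
| "open1 k t (FAll F) = FAll (open1 (Suc k) t F)"
| "open1 k t (FEx2 n F) = FEx2 n (open1 k t F)"
| "open1 k t (FAll2 n F) = FAll2 n (open1 k t F)"

text \<open>Plugging terms ts into the body of an abstract (d = number of first-order
  binders passed inside the body).\<close>
fun shift_tm :: "nat \<Rightarrow> tm \<Rightarrow> tm" where
  "shift_tm d (BV j) = BV (j + d)"
| "shift_tm d (FV a) = FV a"

fun inst_tm :: "nat \<Rightarrow> tm list \<Rightarrow> tm \<Rightarrow> tm" where
  "inst_tm d ts (BV i) =
     (if d \<le> i \<and> i < d + length ts then shift_tm d (ts ! (i - d)) else BV i)"
| "inst_tm d ts (FV a) = FV a"

fun inst :: "nat \<Rightarrow> tm list \<Rightarrow> fm \<Rightarrow> fm" where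
  "inst d ts (FAtom p us) = FAtom p (map (inst_tm d ts) us)"
| "inst d ts (FNeg F) = FNeg (inst d ts F)"
| "inst d ts (FOr F G) = FOr (inst d ts F) (inst d ts G)"
| "inst d ts (FAnd F G) = FAnd (inst d ts F) (inst d ts G)"
| "inst d ts (FEx F) = FEx (inst (Suc d) ts F)"
| "inst d ts (FAll F) = FAll (inst (Suc d) ts F)"
| "inst d ts (FEx2 n F) = FEx2 n (inst d ts F)"
| "inst d ts (FAll2 n F) = FAll2 n (inst d ts F)"

fun open2 :: "nat \<Rightarrow> fm \<Rightarrow> fm \<Rightarrow> fm" where
  "open2 k G (FAtom (PB i) ts) = (if i = k then inst 0 ts G else FAtom (PB i) ts)"
| "open2 k G (FAtom (PF X n) ts) = FAtom (PF X n) ts"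
| "open2 k G (FNeg F) = FNeg (open2 k G F)"
| "open2 k G (FOr F H) = FOr (open2 k G F) (open2 k G H)"
| "open2 k G (FAnd F H) = FAnd (open2 k G F) (open2 k G H)"
| "open2 k G (FEx F) = FEx (open2 k G F)"
| "open2 k G (FAll F) = FAll (open2 k G F)"
| "open2 k G (FEx2 n F) = FEx2 n (open2 (Suc k) G F)"
| "open2 k G (FAll2 n F) = FAll2 n (open2 (Suc k) G F)"

definition pvar_abs :: "nat \<Rightarrow> nat \<Rightarrow> fm" where
  "pvar_abs X n = FAtom (PF X n) (map BV [0..<n])"

fun fv_tm :: "tm \<Rightarrow> nat set" where
  "fv_tm (FV a) = {a}"
| "fv_tm (BV i) = {}"

fun fv :: "fm \<Rightarrow> nat set" where
  "fv (FAtom p ts) = (\<Union>t\<in>set ts. fv_tm t)"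
| "fv (FNeg F) = fv F"
| "fv (FOr F G) = fv F \<union> fv G"
| "fv (FAnd F G) = fv F \<union> fv G"
| "fv (FEx F) = fv F"
| "fv (FAll F) = fv F"
| "fv (FEx2 n F) = fv F"
| "fv (FAll2 n F) = fv F"

fun fpv :: "fm \<Rightarrow> (nat \<times> nat) set" where
  "fpv (FAtom (PF X n) ts) = {(X, n)}"
| "fpv (FAtom (PB i) ts) = {}"
| "fpv (FNeg F) = fpv F"
| "fpv (FOr F G) = fpv F \<union> fpv G"
| "fpv (FAnd F G) = fpv F \<union> fpv G"
| "fpv (FEx F) = fpv F"
| "fpv (FAll F) = fpv F"
| "fpv (FEx2 n F) = fpv F"
| "fpv (FAll2 n F) = fpv F"

definition fvs :: "fm set \<Rightarrow> nat set" where
  "fvs A = (\<Union>F\<in>A. fv F)"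

definition fpvs :: "fm set \<Rightarrow> (nat \<times> nat) set" where
  "fpvs A = (\<Union>F\<in>A. fpv F)"

section \<open>The cut-free calculus G^1LC^cf\<close>

text \<open>deriv \<Gamma> \<Delta>: the sequent \<Gamma> \<Rightarrow> \<Delta> is derivable. The major formula is kept
  in the premises.\<close>
inductive deriv :: "fm set \<Rightarrow> fm set \<Rightarrow> bool" where
  init: "finite \<Gamma> \<Longrightarrow> finite \<Delta> \<Longrightarrow> is_atom A \<Longrightarrow> deriv (insert A \<Gamma>) (insert A \<Delta>)"
| negL: "deriv (insert (FNeg F) \<Gamma>) (insert F \<Delta>) \<Longrightarrow> deriv (insert (FNeg F) \<Gamma>) \<Delta>"
| negR: "deriv (insert F \<Gamma>) (insert (FNeg F) \<Delta>) \<Longrightarrow> deriv \<Gamma> (insert (FNeg F) \<Delta>)"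
| orL: "deriv (insert F0 (insert (FOr F0 F1) \<Gamma>)) \<Delta> \<Longrightarrow>
        deriv (insert F1 (insert (FOr F0 F1) \<Gamma>)) \<Delta> \<Longrightarrow>
        deriv (insert (FOr F0 F1) \<Gamma>) \<Delta>"
| orR0: "deriv \<Gamma> (insert F0 (insert (FOr F0 F1) \<Delta>)) \<Longrightarrow> deriv \<Gamma> (insert (FOr F0 F1) \<Delta>)"
| orR1: "deriv \<Gamma> (insert F1 (insert (FOr F0 F1) \<Delta>)) \<Longrightarrow> deriv \<Gamma> (insert (FOr F0 F1) \<Delta>)"
| andL0: "deriv (insert F0 (insert (FAnd F0 F1) \<Gamma>)) \<Delta> \<Longrightarrow> deriv (insert (FAnd F0 F1) \<Gamma>) \<Delta>"
| andL1: "deriv (insert F1 (insert (FAnd F0 F1) \<Gamma>)) \<Delta> \<Longrightarrow> deriv (insert (FAnd F0 F1) \<Gamma>) \<Delta>"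
| andR: "deriv \<Gamma> (insert F0 (insert (FAnd F0 F1) \<Delta>)) \<Longrightarrow>
         deriv \<Gamma> (insert F1 (insert (FAnd F0 F1) \<Delta>)) \<Longrightarrow>
         deriv \<Gamma> (insert (FAnd F0 F1) \<Delta>)"
| exL: "deriv (insert (open1 0 (FV a) F) (insert (FEx F) \<Gamma>)) \<Delta> \<Longrightarrow>
        a \<notin> fvs (insert (FEx F) \<Gamma> \<union> \<Delta>) \<Longrightarrow>
        deriv (insert (FEx F) \<Gamma>) \<Delta>"
| exR: "t \<in> Tm0 \<Longrightarrow> deriv \<Gamma> (insert (open1 0 t F) (insert (FEx F) \<Delta>)) \<Longrightarrow>
        deriv \<Gamma> (insert (FEx F) \<Delta>)"
| allL: "t \<in> Tm0 \<Longrightarrow> deriv (insert (open1 0 t F) (insert (FAll F) \<Gamma>)) \<Delta> \<Longrightarrow>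
         deriv (insert (FAll F) \<Gamma>) \<Delta>"
| allR: "deriv \<Gamma> (insert (open1 0 (FV a) F) (insert (FAll F) \<Delta>)) \<Longrightarrow>
         a \<notin> fvs (\<Gamma> \<union> insert (FAll F) \<Delta>) \<Longrightarrow>
         deriv \<Gamma> (insert (FAll F) \<Delta>)"
| ex2L: "deriv (insert (open2 0 (pvar_abs X n) F) (insert (FEx2 n F) \<Gamma>)) \<Delta> \<Longrightarrow>
         (X, n) \<notin> fpvs (insert (FEx2 n F) \<Gamma> \<union> \<Delta>) \<Longrightarrow>
         deriv (insert (FEx2 n F) \<Gamma>) \<Delta>"
| ex2R: "T \<in> Abs n \<Longrightarrow> deriv \<Gamma> (insert (open2 0 T F) (insert (FEx2 n F) \<Delta>)) \<Longrightarrow>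
         deriv \<Gamma> (insert (FEx2 n F) \<Delta>)"
| all2L: "T \<in> Abs n \<Longrightarrow> deriv (insert (open2 0 T F) (insert (FAll2 n F) \<Gamma>)) \<Delta> \<Longrightarrow>
          deriv (insert (FAll2 n F) \<Gamma>) \<Delta>"
| all2R: "deriv \<Gamma> (insert (open2 0 (pvar_abs X n) F) (insert (FAll2 n F) \<Delta>)) \<Longrightarrow>
          (X, n) \<notin> fpvs (\<Gamma> \<union> insert (FAll2 n F) \<Delta>) \<Longrightarrow>
          deriv \<Gamma> (insert (FAll2 n F) \<Delta>)"

type_synonym seq = "fm set \<times> fm set"

definition Seqs :: "seq set" where
  "Seqs = {(\<Gamma>, \<Delta>). finite \<Gamma> \<and> finite \<Delta> \<and> \<Gamma> \<subseteq> Fm \<and> \<Delta> \<subseteq> Fm}"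

definition seqM :: "seq \<Rightarrow> seq set" where
  "seqM x = {y \<in> Seqs. deriv (fst x \<union> fst y) (snd x \<union> snd y)}"

text \<open>Intersections relative to S (so that the empty intersection is S).\<close>
definition BS :: "seq set set" where
  "BS = {\<alpha>. \<alpha> \<subseteq> Seqs \<and> \<alpha> = Seqs \<inter> \<Inter>{seqM x |x. x \<in> Seqs \<and> \<alpha> \<subseteq> seqM x}}"

definition seqm :: "seq \<Rightarrow> seq set" where
  "seqm y = Seqs \<inter> \<Inter>{seqM x |x. x \<in> Seqs \<and> y \<in> seqM x}"

definition infB :: "seq set set \<Rightarrow> seq set" where
  "infB A = Seqs \<inter> \<Inter>A"

definition supB :: "seq set set \<Rightarrow> seq set" where
  "supB A = Seqs \<inter> \<Inter>{\<gamma> \<in> BS. \<Union>A \<subseteq> \<gamma>}"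

definition negB :: "seq set \<Rightarrow> seq set" where
  "negB \<alpha> = Seqs \<inter> \<Inter>{seqM x |x. x \<in> \<alpha>}"

definition DBS :: "(seq set \<times> seq set) set" where
  "DBS = {(a, b). a \<in> BS \<and> b \<in> BS \<and> a \<subseteq> b}"

definition dle :: "seq set \<times> seq set \<Rightarrow> seq set \<times> seq set \<Rightarrow> bool" where
  "dle a b \<longleftrightarrow> fst a \<subseteq> fst b \<and> snd b \<subseteq> snd a"

definition dneg :: "seq set \<times> seq set \<Rightarrow> seq set \<times> seq set" where
  "dneg a = (negB (snd a), negB (fst a))"

definition dsup :: "(seq set \<times> seq set) set \<Rightarrow> seq set \<times> seq set" where
  "dsup P = (supB (fst ` P), supB (snd ` P))"

definition dinf :: "(seq set \<times> seq set) set \<Rightarrow> seq set \<times> seq set" where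
  "dinf P = (infB (fst ` P), infB (snd ` P))"

definition semi_valuation :: "(fm \<Rightarrow> seq set \<times> seq set) \<Rightarrow> bool" where
  "semi_valuation V \<longleftrightarrow>
     (\<forall>A\<in>Fm. V A \<in> DBS)
   \<and> (\<forall>F. FNeg F \<in> Fm \<longrightarrow> dle (V (FNeg F)) (dneg (V F)))
   \<and> (\<forall>F0 F1. FOr F0 F1 \<in> Fm \<longrightarrow> dle (V (FOr F0 F1)) (dsup {V F0, V F1}))
   \<and> (\<forall>F0 F1. FAnd F0 F1 \<in> Fm \<longrightarrow> dle (V (FAnd F0 F1)) (dinf {V F0, V F1}))
   \<and> (\<forall>F. FEx F \<in> Fm \<longrightarrow> dle (V (FEx F)) (dsup {V (open1 0 t F) |t. t \<in> Tm0}))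
   \<and> (\<forall>F. FAll F \<in> Fm \<longrightarrow> dle (V (FAll F)) (dinf {V (open1 0 t F) |t. t \<in> Tm0}))
   \<and> (\<forall>n F. FEx2 n F \<in> Fm \<longrightarrow> dle (V (FEx2 n F)) (dsup {V (open2 0 T F) |T. T \<in> Abs n}))
   \<and> (\<forall>n F. FAll2 n F \<in> Fm \<longrightarrow> dle (V (FAll2 n F)) (dinf {V (open2 0 T F) |T. T \<in> Abs n}))"

end

theory Submission
  imports Defs
begin


fun rtm :: "(nat \<Rightarrow> nat) \<Rightarrow> tm \<Rightarrow> tm" where
  "rtm f (FV a) = FV (f a)" | "rtm f (BV i) = BV i"

fun ren1 :: "(nat \<Rightarrow> nat) \<Rightarrow> fm \<Rightarrow> fm" where
  "ren1 f (FAtom p ts) = FAtom p (map (rtm f) ts)"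
| "ren1 f (FNeg F) = FNeg (ren1 f F)"
| "ren1 f (FOr F G) = FOr (ren1 f F) (ren1 f G)"
| "ren1 f (FAnd F G) = FAnd (ren1 f F) (ren1 f G)"
| "ren1 f (FEx F) = FEx (ren1 f F)"
| "ren1 f (FAll F) = FAll (ren1 f F)"
| "ren1 f (FEx2 n F) = FEx2 n (ren1 f F)"
| "ren1 f (FAll2 n F) = FAll2 n (ren1 f F)"

fun rpv :: "(nat \<Rightarrow> nat \<Rightarrow> nat) \<Rightarrow> pv \<Rightarrow> pv" where
  "rpv g (PF X n) = PF (g n X) n" | "rpv g (PB i) = PB i"

fun ren2 :: "(nat \<Rightarrow> nat \<Rightarrow> nat) \<Rightarrow> fm \<Rightarrow> fm" where
  "ren2 g (FAtom p ts) = FAtom (rpv g p) ts"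
| "ren2 g (FNeg F) = FNeg (ren2 g F)"
| "ren2 g (FOr F G) = FOr (ren2 g F) (ren2 g G)"
| "ren2 g (FAnd F G) = FAnd (ren2 g F) (ren2 g G)"
| "ren2 g (FEx F) = FEx (ren2 g F)"
| "ren2 g (FAll F) = FAll (ren2 g F)"
| "ren2 g (FEx2 n F) = FEx2 n (ren2 g F)"
| "ren2 g (FAll2 n F) = FAll2 n (ren2 g F)"

lemma rtm_shift: "rtm f (shift_tm d t) = shift_tm d (rtm f t)" by (cases t) auto
lemma rtm_open: "rtm f (open_tm k t u) = open_tm k (rtm f t) (rtm f u)" by (cases u) auto
lemma rtm_inst: "rtm f (inst_tm d ts u) = inst_tm d (map (rtm f) ts) (rtm f u)"
  by (cases u) (auto simp: rtm_shift)

lemma ren1_open1: "ren1 f (open1 k t F) = open1 k (rtm f t) (ren1 f F)"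
  by (induction F arbitrary: k) (simp_all add: rtm_open)
lemma ren1_inst: "ren1 f (inst d ts G) = inst d (map (rtm f) ts) (ren1 f G)"
  by (induction G arbitrary: d) (simp_all add: rtm_inst)
lemma ren1_open2: "ren1 f (open2 k G F) = open2 k (ren1 f G) (ren1 f F)"
  by (induction k G F rule: open2.induct) (simp_all add: ren1_inst)
lemma ren1_pvar: "ren1 f (pvar_abs X n) = pvar_abs X n"
  by (simp add: pvar_abs_def)
lemma tm_wf_rtm[simp]: "tm_wf k (rtm f t) = tm_wf k t" by (cases t) auto
lemma wf_ren1[simp]: "wf k as (ren1 f F) = wf k as F"
  by (induction k as F rule: wf.induct) auto
lemma fv_tm_rtm: "fv_tm (rtm f t) = f ` fv_tm t" by (cases t) auto
lemma fv_ren1: "fv (ren1 f F) = f ` fv F"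
  by (induction F) (auto simp: fv_tm_rtm)
lemma fpv_ren1: "fpv (ren1 f F) = fpv F"
  by (induction F rule: fpv.induct) auto
lemma is_atom_ren1[simp]: "is_atom (ren1 f F) = is_atom F" by (cases F) auto
lemma ren1_comp: "ren1 f (ren1 g F) = ren1 (f \<circ> g) F"
proof -
  have t: "rtm f (rtm g t) = rtm (f \<circ> g) t" for t by (cases t) auto
  show ?thesis by (induction F) (simp_all add: t comp_def)
qed
lemma ren1_id_on: "(\<forall>c\<in>fv F. f c = c) \<Longrightarrow> ren1 f F = F"
proof (induction F)
  case (FAtom p ts)
  have "\<forall>t\<in>set ts. rtm f t = t"
  proof
    fix t assume t: "t \<in> set ts"
    hence "\<forall>c\<in>fv_tm t. f c = c" using FAtom by auto
    thus "rtm f t = t" by (cases t) auto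
  qed
  thus ?case by (simp add: map_idI)
qed auto

lemma ren2_open1: "ren2 g (open1 k t F) = open1 k t (ren2 g F)"
  by (induction F arbitrary: k) simp_all
lemma ren2_inst: "ren2 g (inst d ts G) = inst d ts (ren2 g G)"
  by (induction G arbitrary: d) simp_all
lemma ren2_open2: "ren2 g (open2 k G F) = open2 k (ren2 g G) (ren2 g F)"
  by (induction k G F rule: open2.induct) (simp_all add: ren2_inst)
lemma ren2_pvar: "ren2 g (pvar_abs X n) = pvar_abs (g n X) n"
  by (simp add: pvar_abs_def)
lemma wf_ren2[simp]: "wf k as (ren2 g F) = wf k as F"
  by (induction k as F rule: wf.induct) auto
lemma fv_ren2: "fv (ren2 g F) = fv F"
  by (induction F) auto
lemma fpv_ren2: "fpv (ren2 g F) = (\<lambda>(X,k). (g k X, k)) ` fpv F"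
  by (induction F rule: fpv.induct) auto
lemma is_atom_ren2[simp]: "is_atom (ren2 g F) = is_atom F" by (cases F) auto
lemma ren2_comp: "ren2 g (ren2 h F) = ren2 (\<lambda>k. g k \<circ> h k) F"
proof -
  have t: "rpv g (rpv h p) = rpv (\<lambda>k. g k \<circ> h k) p" for p by (cases p) auto
  show ?thesis by (induction F) (simp_all add: t comp_def)
qed
lemma ren2_id_on: "(\<forall>(X,k)\<in>fpv F. g k X = X) \<Longrightarrow> ren2 g F = F"
proof (induction F)
  case (FAtom p ts)
  thus ?case by (cases p) auto
qed auto

lemma fvs_ren1: "fvs (ren1 f ` S) = f ` fvs S"
  by (auto simp: fvs_def fv_ren1)
lemma fpvs_ren1: "fpvs (ren1 f ` S) = fpvs S"
  by (auto simp: fpvs_def fpv_ren1)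
lemma fvs_ren2: "fvs (ren2 g ` S) = fvs S"
  by (auto simp: fvs_def fv_ren2)
lemma fpvs_ren2: "fpvs (ren2 g ` S) = (\<lambda>(X,k). (g k X, k)) ` fpvs S"
  by (auto simp: fpvs_def fpv_ren2)

lemma Tm0_rtm: "t \<in> Tm0 \<Longrightarrow> rtm f t \<in> Tm0" by (auto simp: Tm0_def)
lemma Abs_ren1: "T \<in> Abs n \<Longrightarrow> ren1 f T \<in> Abs n" by (simp add: Abs_def)
lemma Abs_ren2: "T \<in> Abs n \<Longrightarrow> ren2 g T \<in> Abs n" by (simp add: Abs_def)

lemma deriv_ren1: "deriv \<Gamma> \<Delta> \<Longrightarrow> inj f \<Longrightarrow> deriv (ren1 f ` \<Gamma>) (ren1 f ` \<Delta>)"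
proof (induction rule: deriv.induct)
  case (init \<Gamma> \<Delta> A)
  thus ?case by (simp add: deriv.init)
next
  case (exL a F \<Gamma> \<Delta>)
  have d: "deriv (insert (open1 0 (FV (f a)) (ren1 f F)) (insert (FEx (ren1 f F)) (ren1 f ` \<Gamma>))) (ren1 f ` \<Delta>)"
    using exL.IH exL.prems by (simp add: ren1_open1)
  have eq: "insert (FEx (ren1 f F)) (ren1 f ` \<Gamma>) \<union> ren1 f ` \<Delta> = ren1 f ` (insert (FEx F) \<Gamma> \<union> \<Delta>)" by auto
  have fr: "f a \<notin> fvs (insert (FEx (ren1 f F)) (ren1 f ` \<Gamma>) \<union> ren1 f ` \<Delta>)"
    unfolding eq fvs_ren1 using exL.hyps(2) exL.prems by (simp add: inj_image_mem_iff)
  from deriv.exL[OF d fr] show ?case by simp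
next
  case (allR \<Gamma> a F \<Delta>)
  have d: "deriv (ren1 f ` \<Gamma>) (insert (open1 0 (FV (f a)) (ren1 f F)) (insert (FAll (ren1 f F)) (ren1 f ` \<Delta>)))"
    using allR.IH allR.prems by (simp add: ren1_open1)
  have eq: "ren1 f ` \<Gamma> \<union> insert (FAll (ren1 f F)) (ren1 f ` \<Delta>) = ren1 f ` (\<Gamma> \<union> insert (FAll F) \<Delta>)" by auto
  have fr: "f a \<notin> fvs (ren1 f ` \<Gamma> \<union> insert (FAll (ren1 f F)) (ren1 f ` \<Delta>))"
    unfolding eq fvs_ren1 using allR.hyps(2) allR.prems by (simp add: inj_image_mem_iff)
  from deriv.allR[OF d fr] show ?case by simp
next
  case (ex2L X n F \<Gamma> \<Delta>)
  have d: "deriv (insert (open2 0 (pvar_abs X n) (ren1 f F)) (insert (FEx2 n (ren1 f F)) (ren1 f ` \<Gamma>))) (ren1 f ` \<Delta>)"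
    using ex2L.IH ex2L.prems by (simp add: ren1_open2 ren1_pvar)
  have eq: "insert (FEx2 n (ren1 f F)) (ren1 f ` \<Gamma>) \<union> ren1 f ` \<Delta> = ren1 f ` (insert (FEx2 n F) \<Gamma> \<union> \<Delta>)" by auto
  have fr: "(X, n) \<notin> fpvs (insert (FEx2 n (ren1 f F)) (ren1 f ` \<Gamma>) \<union> ren1 f ` \<Delta>)"
    unfolding eq fpvs_ren1 using ex2L.hyps(2) .
  from deriv.ex2L[OF d fr] show ?case by simp
next
  case (all2R \<Gamma> X n F \<Delta>)
  have d: "deriv (ren1 f ` \<Gamma>) (insert (open2 0 (pvar_abs X n) (ren1 f F)) (insert (FAll2 n (ren1 f F)) (ren1 f ` \<Delta>)))"
    using all2R.IH all2R.prems by (simp add: ren1_open2 ren1_pvar)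
  have eq: "ren1 f ` \<Gamma> \<union> insert (FAll2 n (ren1 f F)) (ren1 f ` \<Delta>) = ren1 f ` (\<Gamma> \<union> insert (FAll2 n F) \<Delta>)" by auto
  have fr: "(X, n) \<notin> fpvs (ren1 f ` \<Gamma> \<union> insert (FAll2 n (ren1 f F)) (ren1 f ` \<Delta>))"
    unfolding eq fpvs_ren1 using all2R.hyps(2) .
  from deriv.all2R[OF d fr] show ?case by simp
next
  case (exR t \<Gamma> F \<Delta>)
  thus ?case by (auto simp: ren1_open1 intro: deriv.exR Tm0_rtm)
next
  case (allL t F \<Gamma> \<Delta>)
  thus ?case by (auto simp: ren1_open1 intro: deriv.allL Tm0_rtm)
next
  case (ex2R T n \<Gamma> F \<Delta>)
  thus ?case by (auto simp: ren1_open2 intro: deriv.ex2R Abs_ren1)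
next
  case (all2L T n F \<Gamma> \<Delta>)
  thus ?case by (auto simp: ren1_open2 intro: deriv.all2L Abs_ren1)
qed (auto intro: deriv.intros)


lemma fpv_img_mem: "\<forall>k. inj (g k) \<Longrightarrow> (X, n) \<notin> A \<Longrightarrow> (g n X, n) \<notin> (\<lambda>(X,k). (g k X, k)) ` A"
  by (auto simp: inj_eq)

lemma deriv_ren2: "deriv \<Gamma> \<Delta> \<Longrightarrow> \<forall>k. inj (g k) \<Longrightarrow> deriv (ren2 g ` \<Gamma>) (ren2 g ` \<Delta>)"
proof (induction rule: deriv.induct)
  case (init \<Gamma> \<Delta> A)
  thus ?case by (simp add: deriv.init)
next
  case (exL a F \<Gamma> \<Delta>)
  have d: "deriv (insert (open1 0 (FV a) (ren2 g F)) (insert (FEx (ren2 g F)) (ren2 g ` \<Gamma>))) (ren2 g ` \<Delta>)"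
    using exL.IH exL.prems by (simp add: ren2_open1)
  have eq: "insert (FEx (ren2 g F)) (ren2 g ` \<Gamma>) \<union> ren2 g ` \<Delta> = ren2 g ` (insert (FEx F) \<Gamma> \<union> \<Delta>)" by auto
  have fr: "a \<notin> fvs (insert (FEx (ren2 g F)) (ren2 g ` \<Gamma>) \<union> ren2 g ` \<Delta>)"
    unfolding eq fvs_ren2 using exL.hyps(2) .
  from deriv.exL[OF d fr] show ?case by simp
next
  case (allR \<Gamma> a F \<Delta>)
  have d: "deriv (ren2 g ` \<Gamma>) (insert (open1 0 (FV a) (ren2 g F)) (insert (FAll (ren2 g F)) (ren2 g ` \<Delta>)))"
    using allR.IH allR.prems by (simp add: ren2_open1)
  have eq: "ren2 g ` \<Gamma> \<union> insert (FAll (ren2 g F)) (ren2 g ` \<Delta>) = ren2 g ` (\<Gamma> \<union> insert (FAll F) \<Delta>)" by auto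
  have fr: "a \<notin> fvs (ren2 g ` \<Gamma> \<union> insert (FAll (ren2 g F)) (ren2 g ` \<Delta>))"
    unfolding eq fvs_ren2 using allR.hyps(2) .
  from deriv.allR[OF d fr] show ?case by simp
next
  case (ex2L X n F \<Gamma> \<Delta>)
  have d: "deriv (insert (open2 0 (pvar_abs (g n X) n) (ren2 g F)) (insert (FEx2 n (ren2 g F)) (ren2 g ` \<Gamma>))) (ren2 g ` \<Delta>)"
    using ex2L.IH ex2L.prems by (simp add: ren2_open2 ren2_pvar)
  have eq: "insert (FEx2 n (ren2 g F)) (ren2 g ` \<Gamma>) \<union> ren2 g ` \<Delta> = ren2 g ` (insert (FEx2 n F) \<Gamma> \<union> \<Delta>)" by auto
  have fr: "(g n X, n) \<notin> fpvs (insert (FEx2 n (ren2 g F)) (ren2 g ` \<Gamma>) \<union> ren2 g ` \<Delta>)"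
    unfolding eq fpvs_ren2 by (rule fpv_img_mem[OF ex2L.prems ex2L.hyps(2)])
  from deriv.ex2L[OF d fr] show ?case by simp
next
  case (all2R \<Gamma> X n F \<Delta>)
  have d: "deriv (ren2 g ` \<Gamma>) (insert (open2 0 (pvar_abs (g n X) n) (ren2 g F)) (insert (FAll2 n (ren2 g F)) (ren2 g ` \<Delta>)))"
    using all2R.IH all2R.prems by (simp add: ren2_open2 ren2_pvar)
  have eq: "ren2 g ` \<Gamma> \<union> insert (FAll2 n (ren2 g F)) (ren2 g ` \<Delta>) = ren2 g ` (\<Gamma> \<union> insert (FAll2 n F) \<Delta>)" by auto
  have fr: "(g n X, n) \<notin> fpvs (ren2 g ` \<Gamma> \<union> insert (FAll2 n (ren2 g F)) (ren2 g ` \<Delta>))"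
    unfolding eq fpvs_ren2 by (rule fpv_img_mem[OF all2R.prems all2R.hyps(2)])
  from deriv.all2R[OF d fr] show ?case by simp
next
  case (exR t \<Gamma> F \<Delta>)
  thus ?case by (auto simp: ren2_open1 intro: deriv.exR)
next
  case (allL t F \<Gamma> \<Delta>)
  thus ?case by (auto simp: ren2_open1 intro: deriv.allL)
next
  case (ex2R T n \<Gamma> F \<Delta>)
  thus ?case by (auto simp: ren2_open2 intro: deriv.ex2R Abs_ren2)
next
  case (all2L T n F \<Gamma> \<Delta>)
  thus ?case by (auto simp: ren2_open2 intro: deriv.all2L Abs_ren2)
qed (auto intro: deriv.intros)

lemma deriv_finite: "deriv \<Gamma> \<Delta> \<Longrightarrow> finite \<Gamma> \<and> finite \<Delta>"
  by (induction rule: deriv.induct) auto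

lemma finite_fv: "finite (fv F)"
proof (induction F)
  case (FAtom p ts)
  have "finite (fv_tm t)" for t by (cases t) auto
  thus ?case by simp
qed auto

lemma finite_fpv: "finite (fpv F)"
  by (induction F rule: fpv.induct) auto

lemma finite_fvs: "finite S \<Longrightarrow> finite (fvs S)"
  by (simp add: fvs_def finite_fv)
lemma finite_fpvs: "finite S \<Longrightarrow> finite (fpvs S)"
  by (simp add: fpvs_def finite_fpv)

lemma fresh1: "finite S \<Longrightarrow> \<exists>a. a \<notin> fvs S"
  using finite_fvs ex_new_if_finite infinite_UNIV_nat by blast

lemma fresh1': "finite S \<Longrightarrow> \<exists>b. b \<notin> fvs S \<and> b \<noteq> a"
proof -
  assume "finite S"
  hence "finite (insert a (fvs S))" by (simp add: finite_fvs)
  then obtain b where "b \<notin> insert a (fvs S)" using ex_new_if_finite infinite_UNIV_nat by blast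
  thus ?thesis by blast
qed

lemma fresh2': "finite S \<Longrightarrow> \<exists>Y. (Y, n) \<notin> fpvs S \<and> Y \<noteq> X"
proof -
  assume "finite S"
  hence "finite (insert X (fst ` fpvs S))" by (simp add: finite_fpvs)
  then obtain Y where "Y \<notin> insert X (fst ` fpvs S)" using ex_new_if_finite infinite_UNIV_nat by blast
  hence "(Y, n) \<notin> fpvs S \<and> Y \<noteq> X" by force
  thus ?thesis by blast
qed

definition sw :: "nat \<Rightarrow> nat \<Rightarrow> nat \<Rightarrow> nat" where
  "sw a b c = (if c = a then b else if c = b then a else c)"

lemma sw_inj: "inj (sw a b)" by (auto simp: inj_def sw_def)
lemma sw_sw: "sw a b \<circ> sw a b = id" by (auto simp: sw_def)

definition sw2 :: "nat \<Rightarrow> nat \<Rightarrow> nat \<Rightarrow> nat \<Rightarrow> nat \<Rightarrow> nat" where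
  "sw2 X Y n = (\<lambda>k Z. if k = n then sw X Y Z else Z)"

lemma sw2_inj: "\<forall>k. inj (sw2 X Y n k)" by (auto simp: inj_def sw2_def sw_def)

lemma ren1_sw_sw: "ren1 (sw a b) (ren1 (sw a b) F) = F"
  by (simp add: ren1_comp sw_sw ren1_id_on)

lemma ren2_sw_sw: "ren2 (sw2 X Y n) (ren2 (sw2 X Y n) F) = F"
  unfolding ren2_comp by (rule ren2_id_on) (auto simp: sw2_def sw_def)

lemma ren1_sw_fix: "a \<notin> fv F \<Longrightarrow> b \<notin> fv F \<Longrightarrow> ren1 (sw a b) F = F"
  by (rule ren1_id_on) (auto simp: sw_def)

lemma ren1_sw_fixS: "a \<notin> fvs S \<Longrightarrow> b \<notin> fvs S \<Longrightarrow> ren1 (sw a b) ` S = S"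
  by (force simp: fvs_def ren1_sw_fix)

lemma ren2_sw_fix: "(X, n) \<notin> fpv F \<Longrightarrow> (Y, n) \<notin> fpv F \<Longrightarrow> ren2 (sw2 X Y n) F = F"
  by (rule ren2_id_on) (auto simp: sw2_def sw_def)

lemma ren2_sw_fixS: "(X, n) \<notin> fpvs S \<Longrightarrow> (Y, n) \<notin> fpvs S \<Longrightarrow> ren2 (sw2 X Y n) ` S = S"
  by (force simp: fpvs_def ren2_sw_fix)

lemma ren1_sw_img2: "ren1 (sw a b) ` ren1 (sw a b) ` S = S"
  by (simp add: image_image ren1_sw_sw)
lemma ren2_sw_img2: "ren2 (sw2 X Y n) ` ren2 (sw2 X Y n) ` S = S"
  by (simp add: image_image ren2_sw_sw)

lemma deriv_weak: "deriv \<Gamma> \<Delta> \<Longrightarrow> finite \<Lambda> \<Longrightarrow> finite \<Theta> \<Longrightarrow> deriv (\<Gamma> \<union> \<Lambda>) (\<Delta> \<union> \<Theta>)"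
proof (induction arbitrary: \<Lambda> \<Theta> rule: deriv.induct)
  case (init \<Gamma> \<Delta> A)
  thus ?case by (simp add: deriv.init)
next
  case (exL a F \<Gamma> \<Delta>)
  have fin: "finite \<Gamma>" "finite \<Delta>" using deriv_finite[OF exL.hyps(1)] by auto
  obtain b where b: "b \<notin> fvs (insert (FEx F) \<Gamma> \<union> \<Delta> \<union> \<Lambda> \<union> \<Theta>)" "b \<noteq> a"
    using fresh1'[of "insert (FEx F) \<Gamma> \<union> \<Delta> \<union> \<Lambda> \<union> \<Theta>" a] fin exL.prems by auto
  let ?s = "sw a b"
  have "deriv (insert (open1 0 (FV a) F) (insert (FEx F) \<Gamma>) \<union> ren1 ?s ` \<Lambda>) (\<Delta> \<union> ren1 ?s ` \<Theta>)"
    using exL.IH exL.prems by simp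
  from deriv_ren1[OF this sw_inj]
  have d: "deriv (ren1 ?s ` (insert (open1 0 (FV a) F) (insert (FEx F) \<Gamma>) \<union> ren1 ?s ` \<Lambda>))
     (ren1 ?s ` (\<Delta> \<union> ren1 ?s ` \<Theta>))" .
  have aF: "a \<notin> fv F" "a \<notin> fvs \<Gamma>" "a \<notin> fvs \<Delta>" using exL.hyps(2) by (auto simp: fvs_def)
  have bF: "b \<notin> fv F" "b \<notin> fvs \<Gamma>" "b \<notin> fvs \<Delta>" using b by (auto simp: fvs_def)
  have e1: "ren1 ?s (open1 0 (FV a) F) = open1 0 (FV b) F"
    using aF bF by (simp add: ren1_open1 ren1_sw_fix sw_def)
  have e2: "ren1 ?s (FEx F) = FEx F" using aF bF by (simp add: ren1_sw_fix)
  have "deriv (insert (open1 0 (FV b) F) (insert (FEx F) (\<Gamma> \<union> \<Lambda>))) (\<Delta> \<union> \<Theta>)"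
    using d e1 e2 aF bF by (simp add: image_Un ren1_sw_fixS ren1_sw_img2)
  moreover have "b \<notin> fvs (insert (FEx F) (\<Gamma> \<union> \<Lambda>) \<union> (\<Delta> \<union> \<Theta>))"
    using b by (auto simp: fvs_def)
  ultimately have "deriv (insert (FEx F) (\<Gamma> \<union> \<Lambda>)) (\<Delta> \<union> \<Theta>)" by (rule deriv.exL)
  thus ?case by simp
next
  case (allR \<Gamma> a F \<Delta>)
  have fin: "finite \<Gamma>" "finite \<Delta>" using deriv_finite[OF allR.hyps(1)] by auto
  obtain b where b: "b \<notin> fvs (insert (FAll F) \<Gamma> \<union> \<Delta> \<union> \<Lambda> \<union> \<Theta>)" "b \<noteq> a"
    using fresh1'[of "insert (FAll F) \<Gamma> \<union> \<Delta> \<union> \<Lambda> \<union> \<Theta>" a] fin allR.prems by auto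
  let ?s = "sw a b"
  have "deriv (\<Gamma> \<union> ren1 ?s ` \<Lambda>) (insert (open1 0 (FV a) F) (insert (FAll F) \<Delta>) \<union> ren1 ?s ` \<Theta>)"
    using allR.IH allR.prems by simp
  from deriv_ren1[OF this sw_inj]
  have d: "deriv (ren1 ?s ` (\<Gamma> \<union> ren1 ?s ` \<Lambda>))
     (ren1 ?s ` (insert (open1 0 (FV a) F) (insert (FAll F) \<Delta>) \<union> ren1 ?s ` \<Theta>))" .
  have aF: "a \<notin> fv F" "a \<notin> fvs \<Gamma>" "a \<notin> fvs \<Delta>" using allR.hyps(2) by (auto simp: fvs_def)
  have bF: "b \<notin> fv F" "b \<notin> fvs \<Gamma>" "b \<notin> fvs \<Delta>" using b by (auto simp: fvs_def)
  have e1: "ren1 ?s (open1 0 (FV a) F) = open1 0 (FV b) F"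
    using aF bF by (simp add: ren1_open1 ren1_sw_fix sw_def)
  have e2: "ren1 ?s (FAll F) = FAll F" using aF bF by (simp add: ren1_sw_fix)
  have "deriv (\<Gamma> \<union> \<Lambda>) (insert (open1 0 (FV b) F) (insert (FAll F) (\<Delta> \<union> \<Theta>)))"
    using d e1 e2 aF bF by (simp add: image_Un ren1_sw_fixS ren1_sw_img2)
  moreover have "b \<notin> fvs ((\<Gamma> \<union> \<Lambda>) \<union> insert (FAll F) (\<Delta> \<union> \<Theta>))"
    using b by (auto simp: fvs_def)
  ultimately have "deriv (\<Gamma> \<union> \<Lambda>) (insert (FAll F) (\<Delta> \<union> \<Theta>))" by (rule deriv.allR)
  thus ?case by simp
next
  case (ex2L X n F \<Gamma> \<Delta>)
  have fin: "finite \<Gamma>" "finite \<Delta>" using deriv_finite[OF ex2L.hyps(1)] by auto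
  obtain Y where b: "(Y, n) \<notin> fpvs (insert (FEx2 n F) \<Gamma> \<union> \<Delta> \<union> \<Lambda> \<union> \<Theta>)" "Y \<noteq> X"
    using fresh2'[of "insert (FEx2 n F) \<Gamma> \<union> \<Delta> \<union> \<Lambda> \<union> \<Theta>" n X] fin ex2L.prems by auto
  let ?s = "sw2 X Y n"
  have "deriv (insert (open2 0 (pvar_abs X n) F) (insert (FEx2 n F) \<Gamma>) \<union> ren2 ?s ` \<Lambda>) (\<Delta> \<union> ren2 ?s ` \<Theta>)"
    using ex2L.IH ex2L.prems by simp
  from deriv_ren2[OF this sw2_inj]
  have d: "deriv (ren2 ?s ` (insert (open2 0 (pvar_abs X n) F) (insert (FEx2 n F) \<Gamma>) \<union> ren2 ?s ` \<Lambda>))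
     (ren2 ?s ` (\<Delta> \<union> ren2 ?s ` \<Theta>))" .
  have aF: "(X, n) \<notin> fpv F" "(X, n) \<notin> fpvs \<Gamma>" "(X, n) \<notin> fpvs \<Delta>" using ex2L.hyps(2) by (auto simp: fpvs_def)
  have bF: "(Y, n) \<notin> fpv F" "(Y, n) \<notin> fpvs \<Gamma>" "(Y, n) \<notin> fpvs \<Delta>" using b by (auto simp: fpvs_def)
  have e1: "ren2 ?s (open2 0 (pvar_abs X n) F) = open2 0 (pvar_abs Y n) F"
    using aF bF by (simp add: ren2_open2 ren2_pvar ren2_sw_fix) (simp add: sw2_def sw_def)
  have e2: "ren2 ?s (FEx2 n F) = FEx2 n F" using aF bF by (simp add: ren2_sw_fix)
  have "deriv (insert (open2 0 (pvar_abs Y n) F) (insert (FEx2 n F) (\<Gamma> \<union> \<Lambda>))) (\<Delta> \<union> \<Theta>)"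
    using d e1 e2 aF bF by (simp add: image_Un ren2_sw_fixS ren2_sw_img2)
  moreover have "(Y, n) \<notin> fpvs (insert (FEx2 n F) (\<Gamma> \<union> \<Lambda>) \<union> (\<Delta> \<union> \<Theta>))"
    using b by (auto simp: fpvs_def)
  ultimately have "deriv (insert (FEx2 n F) (\<Gamma> \<union> \<Lambda>)) (\<Delta> \<union> \<Theta>)" by (rule deriv.ex2L)
  thus ?case by simp
next
  case (all2R \<Gamma> X n F \<Delta>)
  have fin: "finite \<Gamma>" "finite \<Delta>" using deriv_finite[OF all2R.hyps(1)] by auto
  obtain Y where b: "(Y, n) \<notin> fpvs (insert (FAll2 n F) \<Gamma> \<union> \<Delta> \<union> \<Lambda> \<union> \<Theta>)" "Y \<noteq> X"
    using fresh2'[of "insert (FAll2 n F) \<Gamma> \<union> \<Delta> \<union> \<Lambda> \<union> \<Theta>" n X] fin all2R.prems by auto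
  let ?s = "sw2 X Y n"
  have "deriv (\<Gamma> \<union> ren2 ?s ` \<Lambda>) (insert (open2 0 (pvar_abs X n) F) (insert (FAll2 n F) \<Delta>) \<union> ren2 ?s ` \<Theta>)"
    using all2R.IH all2R.prems by simp
  from deriv_ren2[OF this sw2_inj]
  have d: "deriv (ren2 ?s ` (\<Gamma> \<union> ren2 ?s ` \<Lambda>))
     (ren2 ?s ` (insert (open2 0 (pvar_abs X n) F) (insert (FAll2 n F) \<Delta>) \<union> ren2 ?s ` \<Theta>))" .
  have aF: "(X, n) \<notin> fpv F" "(X, n) \<notin> fpvs \<Gamma>" "(X, n) \<notin> fpvs \<Delta>" using all2R.hyps(2) by (auto simp: fpvs_def)
  have bF: "(Y, n) \<notin> fpv F" "(Y, n) \<notin> fpvs \<Gamma>" "(Y, n) \<notin> fpvs \<Delta>" using b by (auto simp: fpvs_def)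
  have e1: "ren2 ?s (open2 0 (pvar_abs X n) F) = open2 0 (pvar_abs Y n) F"
    using aF bF by (simp add: ren2_open2 ren2_pvar ren2_sw_fix) (simp add: sw2_def sw_def)
  have e2: "ren2 ?s (FAll2 n F) = FAll2 n F" using aF bF by (simp add: ren2_sw_fix)
  have "deriv (\<Gamma> \<union> \<Lambda>) (insert (open2 0 (pvar_abs Y n) F) (insert (FAll2 n F) (\<Delta> \<union> \<Theta>)))"
    using d e1 e2 aF bF by (simp add: image_Un ren2_sw_fixS ren2_sw_img2)
  moreover have "(Y, n) \<notin> fpvs ((\<Gamma> \<union> \<Lambda>) \<union> insert (FAll2 n F) (\<Delta> \<union> \<Theta>))"
    using b by (auto simp: fpvs_def)
  ultimately have "deriv (\<Gamma> \<union> \<Lambda>) (insert (FAll2 n F) (\<Delta> \<union> \<Theta>))" by (rule deriv.all2R)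
  thus ?case by simp
qed (auto intro: deriv.intros)

lemma wk: "deriv \<Gamma> \<Delta> \<Longrightarrow> \<Gamma> \<subseteq> \<Gamma>' \<Longrightarrow> \<Delta> \<subseteq> \<Delta>' \<Longrightarrow> finite \<Gamma>' \<Longrightarrow> finite \<Delta>' \<Longrightarrow> deriv \<Gamma>' \<Delta>'"
  using deriv_weak[of \<Gamma> \<Delta> \<Gamma>' \<Delta>'] by (simp add: Un_absorb1)




section \<open>Derived rules with weakening\<close>

lemma wkI: "deriv \<Gamma> \<Delta> \<Longrightarrow> \<Gamma> \<subseteq> \<Gamma>' \<Longrightarrow> \<Delta> \<subseteq> \<Delta>' \<Longrightarrow> finite \<Gamma>' \<and> finite \<Delta>' \<Longrightarrow> deriv \<Gamma>' \<Delta>'"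
  by (erule wk) auto

lemma r_negL: "finite \<Gamma> \<Longrightarrow> finite \<Delta> \<Longrightarrow> deriv \<Gamma> (insert F \<Delta>) \<Longrightarrow> deriv (insert (FNeg F) \<Gamma>) \<Delta>"
proof -
  assume f: "finite \<Gamma>" "finite \<Delta>" and d: "deriv \<Gamma> (insert F \<Delta>)"
  have "deriv (insert (FNeg F) \<Gamma>) (insert F \<Delta>)" by (rule wkI[OF d]) (simp_all add: f subset_insertI)
  thus ?thesis by (rule deriv.negL)
qed
lemma r_negR: "finite \<Gamma> \<Longrightarrow> finite \<Delta> \<Longrightarrow> deriv (insert F \<Gamma>) \<Delta> \<Longrightarrow> deriv \<Gamma> (insert (FNeg F) \<Delta>)"
proof -
  assume f: "finite \<Gamma>" "finite \<Delta>" and d: "deriv (insert F \<Gamma>) \<Delta>"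
  have "deriv (insert F \<Gamma>) (insert (FNeg F) \<Delta>)" by (rule wkI[OF d]) (simp_all add: f subset_insertI)
  thus ?thesis by (rule deriv.negR)
qed
lemma r_orL: "finite \<Gamma> \<Longrightarrow> finite \<Delta> \<Longrightarrow> deriv (insert F0 \<Gamma>) \<Delta> \<Longrightarrow> deriv (insert F1 \<Gamma>) \<Delta>
  \<Longrightarrow> deriv (insert (FOr F0 F1) \<Gamma>) \<Delta>"
proof -
  assume f: "finite \<Gamma>" "finite \<Delta>" and d0: "deriv (insert F0 \<Gamma>) \<Delta>" and d1: "deriv (insert F1 \<Gamma>) \<Delta>"
  have 0: "deriv (insert F0 (insert (FOr F0 F1) \<Gamma>)) \<Delta>" by (rule wkI[OF d0]) (auto simp: f)
  have 1: "deriv (insert F1 (insert (FOr F0 F1) \<Gamma>)) \<Delta>" by (rule wkI[OF d1]) (auto simp: f)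
  show ?thesis by (rule deriv.orL[OF 0 1])
qed
lemma r_orR0: "finite \<Gamma> \<Longrightarrow> finite \<Delta> \<Longrightarrow> deriv \<Gamma> (insert F0 \<Delta>) \<Longrightarrow> deriv \<Gamma> (insert (FOr F0 F1) \<Delta>)"
proof -
  assume f: "finite \<Gamma>" "finite \<Delta>" and d: "deriv \<Gamma> (insert F0 \<Delta>)"
  have "deriv \<Gamma> (insert F0 (insert (FOr F0 F1) \<Delta>))" by (rule wkI[OF d]) (auto simp: f)
  thus ?thesis by (rule deriv.orR0)
qed
lemma r_orR1: "finite \<Gamma> \<Longrightarrow> finite \<Delta> \<Longrightarrow> deriv \<Gamma> (insert F1 \<Delta>) \<Longrightarrow> deriv \<Gamma> (insert (FOr F0 F1) \<Delta>)"
proof -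
  assume f: "finite \<Gamma>" "finite \<Delta>" and d: "deriv \<Gamma> (insert F1 \<Delta>)"
  have "deriv \<Gamma> (insert F1 (insert (FOr F0 F1) \<Delta>))" by (rule wkI[OF d]) (auto simp: f)
  thus ?thesis by (rule deriv.orR1)
qed
lemma r_andL0: "finite \<Gamma> \<Longrightarrow> finite \<Delta> \<Longrightarrow> deriv (insert F0 \<Gamma>) \<Delta> \<Longrightarrow> deriv (insert (FAnd F0 F1) \<Gamma>) \<Delta>"
proof -
  assume f: "finite \<Gamma>" "finite \<Delta>" and d: "deriv (insert F0 \<Gamma>) \<Delta>"
  have "deriv (insert F0 (insert (FAnd F0 F1) \<Gamma>)) \<Delta>" by (rule wkI[OF d]) (auto simp: f)
  thus ?thesis by (rule deriv.andL0)
qed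
lemma r_andL1: "finite \<Gamma> \<Longrightarrow> finite \<Delta> \<Longrightarrow> deriv (insert F1 \<Gamma>) \<Delta> \<Longrightarrow> deriv (insert (FAnd F0 F1) \<Gamma>) \<Delta>"
proof -
  assume f: "finite \<Gamma>" "finite \<Delta>" and d: "deriv (insert F1 \<Gamma>) \<Delta>"
  have "deriv (insert F1 (insert (FAnd F0 F1) \<Gamma>)) \<Delta>" by (rule wkI[OF d]) (auto simp: f)
  thus ?thesis by (rule deriv.andL1)
qed
lemma r_andR: "finite \<Gamma> \<Longrightarrow> finite \<Delta> \<Longrightarrow> deriv \<Gamma> (insert F0 \<Delta>) \<Longrightarrow> deriv \<Gamma> (insert F1 \<Delta>)
  \<Longrightarrow> deriv \<Gamma> (insert (FAnd F0 F1) \<Delta>)"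
proof -
  assume f: "finite \<Gamma>" "finite \<Delta>" and d0: "deriv \<Gamma> (insert F0 \<Delta>)" and d1: "deriv \<Gamma> (insert F1 \<Delta>)"
  have 0: "deriv \<Gamma> (insert F0 (insert (FAnd F0 F1) \<Delta>))" by (rule wkI[OF d0]) (auto simp: f)
  have 1: "deriv \<Gamma> (insert F1 (insert (FAnd F0 F1) \<Delta>))" by (rule wkI[OF d1]) (auto simp: f)
  show ?thesis by (rule deriv.andR[OF 0 1])
qed
lemma r_exR: "finite \<Gamma> \<Longrightarrow> finite \<Delta> \<Longrightarrow> t \<in> Tm0 \<Longrightarrow> deriv \<Gamma> (insert (open1 0 t F) \<Delta>) \<Longrightarrow> deriv \<Gamma> (insert (FEx F) \<Delta>)"
proof -
  assume f: "finite \<Gamma>" "finite \<Delta>" and t: "t \<in> Tm0" and d: "deriv \<Gamma> (insert (open1 0 t F) \<Delta>)"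
  have "deriv \<Gamma> (insert (open1 0 t F) (insert (FEx F) \<Delta>))" by (rule wkI[OF d]) (auto simp: f)
  thus ?thesis by (rule deriv.exR[OF t])
qed
lemma r_allL: "finite \<Gamma> \<Longrightarrow> finite \<Delta> \<Longrightarrow> t \<in> Tm0 \<Longrightarrow> deriv (insert (open1 0 t F) \<Gamma>) \<Delta> \<Longrightarrow> deriv (insert (FAll F) \<Gamma>) \<Delta>"
proof -
  assume f: "finite \<Gamma>" "finite \<Delta>" and t: "t \<in> Tm0" and d: "deriv (insert (open1 0 t F) \<Gamma>) \<Delta>"
  have "deriv (insert (open1 0 t F) (insert (FAll F) \<Gamma>)) \<Delta>" by (rule wkI[OF d]) (auto simp: f)
  thus ?thesis by (rule deriv.allL[OF t])
qed
lemma r_ex2R: "finite \<Gamma> \<Longrightarrow> finite \<Delta> \<Longrightarrow> T \<in> Abs n \<Longrightarrow> deriv \<Gamma> (insert (open2 0 T F) \<Delta>) \<Longrightarrow> deriv \<Gamma> (insert (FEx2 n F) \<Delta>)"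
proof -
  assume f: "finite \<Gamma>" "finite \<Delta>" and t: "T \<in> Abs n" and d: "deriv \<Gamma> (insert (open2 0 T F) \<Delta>)"
  have "deriv \<Gamma> (insert (open2 0 T F) (insert (FEx2 n F) \<Delta>))" by (rule wkI[OF d]) (auto simp: f)
  thus ?thesis by (rule deriv.ex2R[OF t])
qed
lemma r_all2L: "finite \<Gamma> \<Longrightarrow> finite \<Delta> \<Longrightarrow> T \<in> Abs n \<Longrightarrow> deriv (insert (open2 0 T F) \<Gamma>) \<Delta> \<Longrightarrow> deriv (insert (FAll2 n F) \<Gamma>) \<Delta>"
proof -
  assume f: "finite \<Gamma>" "finite \<Delta>" and t: "T \<in> Abs n" and d: "deriv (insert (open2 0 T F) \<Gamma>) \<Delta>"
  have "deriv (insert (open2 0 T F) (insert (FAll2 n F) \<Gamma>)) \<Delta>" by (rule wkI[OF d]) (auto simp: f)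
  thus ?thesis by (rule deriv.all2L[OF t])
qed

lemma FV_Tm0: "FV a \<in> Tm0" by (simp add: Tm0_def)
lemma pvar_Abs: "pvar_abs X n \<in> Abs n" by (simp add: Abs_def pvar_abs_def)

lemma r_exL: "finite \<Gamma> \<Longrightarrow> finite \<Delta> \<Longrightarrow> (\<And>t. t \<in> Tm0 \<Longrightarrow> deriv (insert (open1 0 t F) \<Gamma>) \<Delta>) \<Longrightarrow> deriv (insert (FEx F) \<Gamma>) \<Delta>"
proof -
  assume f: "finite \<Gamma>" "finite \<Delta>" and h: "\<And>t. t \<in> Tm0 \<Longrightarrow> deriv (insert (open1 0 t F) \<Gamma>) \<Delta>"
  obtain a where a: "a \<notin> fvs (insert (FEx F) \<Gamma> \<union> \<Delta>)" using fresh1[of "insert (FEx F) \<Gamma> \<union> \<Delta>"] f by (meson finite_Un finite_insert)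
  have "deriv (insert (open1 0 (FV a) F) (insert (FEx F) \<Gamma>)) \<Delta>"
    by (rule wkI[OF h[OF FV_Tm0]]) (auto simp: f)
  from deriv.exL[OF this a] show ?thesis .
qed
lemma r_allR: "finite \<Gamma> \<Longrightarrow> finite \<Delta> \<Longrightarrow> (\<And>t. t \<in> Tm0 \<Longrightarrow> deriv \<Gamma> (insert (open1 0 t F) \<Delta>)) \<Longrightarrow> deriv \<Gamma> (insert (FAll F) \<Delta>)"
proof -
  assume f: "finite \<Gamma>" "finite \<Delta>" and h: "\<And>t. t \<in> Tm0 \<Longrightarrow> deriv \<Gamma> (insert (open1 0 t F) \<Delta>)"
  obtain a where a: "a \<notin> fvs (\<Gamma> \<union> insert (FAll F) \<Delta>)" using fresh1[of "\<Gamma> \<union> insert (FAll F) \<Delta>"] f by (meson finite_Un finite_insert)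
  have "deriv \<Gamma> (insert (open1 0 (FV a) F) (insert (FAll F) \<Delta>))"
    by (rule wkI[OF h[OF FV_Tm0]]) (auto simp: f)
  from deriv.allR[OF this a] show ?thesis .
qed
lemma fresh2: "finite S \<Longrightarrow> \<exists>X. (X, n) \<notin> fpvs S"
  using fresh2' by blast
lemma r_ex2L: "finite \<Gamma> \<Longrightarrow> finite \<Delta> \<Longrightarrow> (\<And>T. T \<in> Abs n \<Longrightarrow> deriv (insert (open2 0 T F) \<Gamma>) \<Delta>) \<Longrightarrow> deriv (insert (FEx2 n F) \<Gamma>) \<Delta>"
proof -
  assume f: "finite \<Gamma>" "finite \<Delta>" and h: "\<And>T. T \<in> Abs n \<Longrightarrow> deriv (insert (open2 0 T F) \<Gamma>) \<Delta>"
  obtain X where a: "(X, n) \<notin> fpvs (insert (FEx2 n F) \<Gamma> \<union> \<Delta>)" using fresh2[of "insert (FEx2 n F) \<Gamma> \<union> \<Delta>"] f by (meson finite_Un finite_insert)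
  have "deriv (insert (open2 0 (pvar_abs X n) F) (insert (FEx2 n F) \<Gamma>)) \<Delta>"
    by (rule wkI[OF h[OF pvar_Abs]]) (auto simp: f)
  from deriv.ex2L[OF this a] show ?thesis .
qed
lemma r_all2R: "finite \<Gamma> \<Longrightarrow> finite \<Delta> \<Longrightarrow> (\<And>T. T \<in> Abs n \<Longrightarrow> deriv \<Gamma> (insert (open2 0 T F) \<Delta>)) \<Longrightarrow> deriv \<Gamma> (insert (FAll2 n F) \<Delta>)"
proof -
  assume f: "finite \<Gamma>" "finite \<Delta>" and h: "\<And>T. T \<in> Abs n \<Longrightarrow> deriv \<Gamma> (insert (open2 0 T F) \<Delta>)"
  obtain X where a: "(X, n) \<notin> fpvs (\<Gamma> \<union> insert (FAll2 n F) \<Delta>)" using fresh2[of "\<Gamma> \<union> insert (FAll2 n F) \<Delta>"] f by (meson finite_Un finite_insert)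
  have "deriv \<Gamma> (insert (open2 0 (pvar_abs X n) F) (insert (FAll2 n F) \<Delta>))"
    by (rule wkI[OF h[OF pvar_Abs]]) (auto simp: f)
  from deriv.all2R[OF this a] show ?thesis .
qed



section \<open>Identity\<close>

fun fsize :: "fm \<Rightarrow> nat" where
  "fsize (FAtom p ts) = 1"
| "fsize (FNeg F) = Suc (fsize F)"
| "fsize (FOr F G) = Suc (fsize F + fsize G)"
| "fsize (FAnd F G) = Suc (fsize F + fsize G)"
| "fsize (FEx F) = Suc (fsize F)"
| "fsize (FAll F) = Suc (fsize F)"
| "fsize (FEx2 n F) = Suc (fsize F)"
| "fsize (FAll2 n F) = Suc (fsize F)"

lemma fsize_open1: "fsize (open1 k t F) = fsize F"
  by (induction F arbitrary: k) auto
lemma fsize_open2: "fsize (open2 k (pvar_abs X n) F) = fsize F"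
  by (induction k "pvar_abs X n" F rule: open2.induct) (auto simp: pvar_abs_def)

lemma deriv_id: "finite \<Gamma> \<Longrightarrow> finite \<Delta> \<Longrightarrow> deriv (insert A \<Gamma>) (insert A \<Delta>)"
proof (induction "fsize A" arbitrary: A \<Gamma> \<Delta> rule: less_induct)
  case less
  show ?case
  proof (cases A)
    case (FAtom p ts) thus ?thesis using less.prems by (simp add: deriv.init)
  next
    case (FNeg F)
    have "deriv (insert F (insert (FNeg F) \<Gamma>)) (insert F (insert (FNeg F) \<Delta>))"
      by (rule less.hyps) (auto simp: FNeg less.prems)
    hence "deriv (insert (FNeg F) (insert F \<Gamma>)) (insert F (insert (FNeg F) \<Delta>))" by (simp add: insert_commute)
    hence "deriv (insert (FNeg F) (insert F \<Gamma>)) (insert (FNeg F) \<Delta>)" by (rule negL)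
    hence "deriv (insert F (insert (FNeg F) \<Gamma>)) (insert (FNeg F) \<Delta>)" by (simp add: insert_commute)
    hence "deriv (insert (FNeg F) \<Gamma>) (insert (FNeg F) \<Delta>)" by (rule negR)
    thus ?thesis using FNeg by simp
  next
    case (FOr F0 F1)
    have 0: "deriv (insert F0 (insert (FOr F0 F1) \<Gamma>)) (insert F0 (insert (FOr F0 F1) \<Delta>))"
      by (rule less.hyps) (auto simp: FOr less.prems)
    have 1: "deriv (insert F1 (insert (FOr F0 F1) \<Gamma>)) (insert F1 (insert (FOr F0 F1) \<Delta>))"
      by (rule less.hyps) (auto simp: FOr less.prems)
    show ?thesis using orL[OF orR0[OF 0] orR1[OF 1]] FOr by simp
  next
    case (FAnd F0 F1)
    have 0: "deriv (insert F0 (insert (FAnd F0 F1) \<Gamma>)) (insert F0 (insert (FAnd F0 F1) \<Delta>))"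
      by (rule less.hyps) (auto simp: FAnd less.prems)
    have 1: "deriv (insert F1 (insert (FAnd F0 F1) \<Gamma>)) (insert F1 (insert (FAnd F0 F1) \<Delta>))"
      by (rule less.hyps) (auto simp: FAnd less.prems)
    show ?thesis using andR[OF andL0[OF 0] andL1[OF 1]] FAnd by simp
  next
    case (FEx F)
    obtain a where a: "a \<notin> fvs (insert (FEx F) \<Gamma> \<union> insert (FEx F) \<Delta>)" using fresh1[of "insert (FEx F) \<Gamma> \<union> insert (FEx F) \<Delta>"] less.prems by (meson finite_Un finite_insert)
    have "deriv (insert (open1 0 (FV a) F) (insert (FEx F) \<Gamma>)) (insert (open1 0 (FV a) F) (insert (FEx F) \<Delta>))"
      by (rule less.hyps) (auto simp: FEx less.prems fsize_open1)
    from exL[OF exR[OF FV_Tm0 this] a] show ?thesis using FEx by simp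
  next
    case (FAll F)
    obtain a where a: "a \<notin> fvs (insert (FAll F) \<Gamma> \<union> insert (FAll F) \<Delta>)" using fresh1[of "insert (FAll F) \<Gamma> \<union> insert (FAll F) \<Delta>"] less.prems by (meson finite_Un finite_insert)
    have "deriv (insert (open1 0 (FV a) F) (insert (FAll F) \<Gamma>)) (insert (open1 0 (FV a) F) (insert (FAll F) \<Delta>))"
      by (rule less.hyps) (auto simp: FAll less.prems fsize_open1)
    from allR[OF allL[OF FV_Tm0 this] a] show ?thesis using FAll by simp
  next
    case (FEx2 n F)
    obtain X where a: "(X, n) \<notin> fpvs (insert (FEx2 n F) \<Gamma> \<union> insert (FEx2 n F) \<Delta>)" using fresh2[of "insert (FEx2 n F) \<Gamma> \<union> insert (FEx2 n F) \<Delta>"] less.prems by (meson finite_Un finite_insert)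
    have "deriv (insert (open2 0 (pvar_abs X n) F) (insert (FEx2 n F) \<Gamma>)) (insert (open2 0 (pvar_abs X n) F) (insert (FEx2 n F) \<Delta>))"
      by (rule less.hyps) (auto simp: FEx2 less.prems fsize_open2)
    from ex2L[OF ex2R[OF pvar_Abs this] a] show ?thesis using FEx2 by simp
  next
    case (FAll2 n F)
    obtain X where a: "(X, n) \<notin> fpvs (insert (FAll2 n F) \<Gamma> \<union> insert (FAll2 n F) \<Delta>)" using fresh2[of "insert (FAll2 n F) \<Gamma> \<union> insert (FAll2 n F) \<Delta>"] less.prems by (meson finite_Un finite_insert)
    have "deriv (insert (open2 0 (pvar_abs X n) F) (insert (FAll2 n F) \<Gamma>)) (insert (open2 0 (pvar_abs X n) F) (insert (FAll2 n F) \<Delta>))"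
      by (rule less.hyps) (auto simp: FAll2 less.prems fsize_open2)
    from all2R[OF all2L[OF pvar_Abs this] a] show ?thesis using FAll2 by simp
  qed
qed



section \<open>Well-formedness of instances\<close>

lemma wf_open1: "wf (Suc k) as F \<Longrightarrow> tm_wf k t \<Longrightarrow> wf k as (open1 k t F)"
proof (induction F arbitrary: k as)
  case (FAtom p ts)
  have "\<forall>u\<in>set ts. tm_wf (Suc k) u \<longrightarrow> tm_wf k (open_tm k t u)"
  proof (intro ballI impI)
    fix u assume "tm_wf (Suc k) u" thus "tm_wf k (open_tm k t u)" using FAtom.prems by (cases u) auto
  qed
  thus ?case using FAtom by (cases p) auto
next
  case (FEx F) thus ?case by (cases t) auto
next
  case (FAll F) thus ?case by (cases t) auto
qed auto

lemma wf_app: "wf k as G \<Longrightarrow> wf k (as @ bs) G"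
  by (induction k as G rule: wf.induct) (auto simp: nth_append)

lemma tm_wf_shift: "tm_wf k t \<Longrightarrow> tm_wf (d + k) (shift_tm d t)"
  by (cases t) auto

lemma wf_inst: "wf (d + length ts) as G \<Longrightarrow> \<forall>t\<in>set ts. tm_wf k t \<Longrightarrow> wf (d + k) as (inst d ts G)"
proof (induction G arbitrary: d as)
  case (FAtom p us)
  have "\<forall>u\<in>set us. tm_wf (d + length ts) u \<longrightarrow> tm_wf (d + k) (inst_tm d ts u)"
  proof (intro ballI impI)
    fix u assume "tm_wf (d + length ts) u"
    thus "tm_wf (d + k) (inst_tm d ts u)" using FAtom.prems(2)
      by (cases u) (auto intro!: tm_wf_shift)
  qed
  thus ?case using FAtom by (cases p) auto
next
  case (FEx G) thus ?case using FEx.IH[of "Suc d"] by simp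
next
  case (FAll G) thus ?case using FAll.IH[of "Suc d"] by simp
qed auto

lemma wf_open2: "wf k (bs @ [n]) F \<Longrightarrow> wf n [] G \<Longrightarrow> wf k bs (open2 (length bs) G F)"
proof (induction "length bs" G F arbitrary: k bs rule: open2.induct)
  case (1 G i ts)
  show ?case
  proof (cases "i = length bs")
    case True
    have "wf (0 + length ts) bs G" using 1 True wf_app[of n "[]" G bs] by (simp add: nth_append)
    hence "wf (0 + k) bs (inst 0 ts G)" by (rule wf_inst) (use 1 in simp)
    thus ?thesis using True by simp
  next
    case False thus ?thesis using 1 by (auto simp: nth_append)
  qed
next
  case (8 G n' F) thus ?case using "8.hyps"[of "n' # bs"] by simp
next
  case (9 G n' F) thus ?case using "9.hyps"[of "n' # bs"] by simp
qed auto

lemma Fm_open1: "FEx F \<in> Fm \<or> FAll F \<in> Fm \<Longrightarrow> t \<in> Tm0 \<Longrightarrow> open1 0 t F \<in> Fm"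
  by (auto simp: Fm_def Tm0_def intro!: wf_open1)

lemma Fm_open2: "FEx2 n F \<in> Fm \<or> FAll2 n F \<in> Fm \<Longrightarrow> T \<in> Abs n \<Longrightarrow> open2 0 T F \<in> Fm"
  using wf_open2[of 0 "[]" n F T] by (auto simp: Fm_def Abs_def)




lemma Seqs_L: "({C},{}) \<in> Seqs \<longleftrightarrow> C \<in> Fm" by (simp add: Seqs_def)
lemma Seqs_R: "({},{C}) \<in> Seqs \<longleftrightarrow> C \<in> Fm" by (simp add: Seqs_def)
lemma Seqs_fin: "x \<in> Seqs \<Longrightarrow> finite (fst x) \<and> finite (snd x)" by (auto simp: Seqs_def)
lemma L_in_M: "({C},{}) \<in> seqM x \<longleftrightarrow> C \<in> Fm \<and> deriv (insert C (fst x)) (snd x)"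
  by (simp add: seqM_def Seqs_L)
lemma in_M_R: "y \<in> seqM ({},{C}) \<longleftrightarrow> y \<in> Seqs \<and> deriv (fst y) (insert C (snd y))"
  by (simp add: seqM_def)
lemma in_M_L: "y \<in> seqM ({C},{}) \<longleftrightarrow> y \<in> Seqs \<and> deriv (insert C (fst y)) (snd y)"
  by (simp add: seqM_def)
lemma seqM_Seqs: "seqM x \<subseteq> Seqs" by (auto simp: seqM_def)
lemma seqm_Seqs: "seqm y \<subseteq> Seqs" by (auto simp: seqm_def)
lemma seqm_sub: "x \<in> Seqs \<Longrightarrow> y \<in> seqM x \<Longrightarrow> seqm y \<subseteq> seqM x"
  unfolding seqm_def by blast
lemma seqm_self: "y \<in> Seqs \<Longrightarrow> y \<in> seqm y"
  unfolding seqm_def by blast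
lemma L_sub: "C \<in> Fm \<Longrightarrow> x \<in> Seqs \<Longrightarrow> deriv (insert C (fst x)) (snd x) \<Longrightarrow> seqm ({C},{}) \<subseteq> seqM x"
  by (rule seqm_sub) (simp_all add: L_in_M)
lemma L_subD: "C \<in> Fm \<Longrightarrow> seqm ({C},{}) \<subseteq> seqM x \<Longrightarrow> deriv (insert C (fst x)) (snd x)"
proof -
  assume C: "C \<in> Fm" and s: "seqm ({C},{}) \<subseteq> seqM x"
  have "({C},{}) \<in> seqm ({C},{})" using C by (simp add: seqm_self Seqs_L)
  hence "({C},{}) \<in> seqM x" using s by blast
  thus ?thesis by (simp add: L_in_M)
qed

lemma BS_closure: "K \<subseteq> Seqs \<Longrightarrow> Seqs \<inter> \<Inter>(seqM ` K) \<in> BS"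
  unfolding BS_def by blast

lemma seqm_BS: "y \<in> Seqs \<Longrightarrow> seqm y \<in> BS"
proof -
  have "seqm y = Seqs \<inter> \<Inter>(seqM ` {x. x \<in> Seqs \<and> y \<in> seqM x})" by (auto simp: seqm_def)
  thus ?thesis using BS_closure[of "{x. x \<in> Seqs \<and> y \<in> seqM x}"] by auto
qed

lemma seqM_BS: "x \<in> Seqs \<Longrightarrow> seqM x \<in> BS"
proof -
  assume x: "x \<in> Seqs"
  have "seqM x = Seqs \<inter> \<Inter>(seqM ` {x})" using seqM_Seqs[of x] by auto
  thus ?thesis using BS_closure[of "{x}"] x by auto
qed

lemma BS_elim: "\<gamma> \<in> BS \<Longrightarrow> z \<in> Seqs \<Longrightarrow> (\<And>x. x \<in> Seqs \<Longrightarrow> \<gamma> \<subseteq> seqM x \<Longrightarrow> z \<in> seqM x) \<Longrightarrow> z \<in> \<gamma>"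
proof -
  assume g: "\<gamma> \<in> BS" and z: "z \<in> Seqs" and h: "\<And>x. x \<in> Seqs \<Longrightarrow> \<gamma> \<subseteq> seqM x \<Longrightarrow> z \<in> seqM x"
  define R where "R = Seqs \<inter> \<Inter>{seqM x |x. x \<in> Seqs \<and> \<gamma> \<subseteq> seqM x}"
  have e: "\<gamma> = R" using g unfolding R_def BS_def by blast
  have "z \<in> R" unfolding R_def using z h by blast
  thus ?thesis using e by simp
qed



lemma sup_fst:
  assumes C: "C \<in> Fm"
    and h: "\<And>x. x \<in> Seqs \<Longrightarrow> \<forall>\<alpha>\<in>A. \<alpha> \<subseteq> seqM x \<Longrightarrow> deriv (insert C (fst x)) (snd x)"
  shows "seqm ({C},{}) \<subseteq> supB A"
proof
  fix z assume z: "z \<in> seqm ({C},{})"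
  have zS: "z \<in> Seqs" using z seqm_Seqs by blast
  have "z \<in> \<gamma>" if g: "\<gamma> \<in> BS" "\<Union>A \<subseteq> \<gamma>" for \<gamma>
  proof (rule BS_elim[OF g(1) zS])
    fix x assume x: "x \<in> Seqs" "\<gamma> \<subseteq> seqM x"
    have "deriv (insert C (fst x)) (snd x)" using h[OF x(1)] x(2) g(2) by blast
    thus "z \<in> seqM x" using L_sub[OF C x(1)] z by blast
  qed
  thus "z \<in> supB A" using zS unfolding supB_def by blast
qed

lemma sup_snd:
  assumes C: "C \<in> Fm" and h: "\<And>\<alpha>. \<alpha> \<in> A \<Longrightarrow> \<alpha> \<subseteq> seqM ({},{C})"
  shows "supB A \<subseteq> seqM ({},{C})"
proof -
  have "seqM ({},{C}) \<in> BS" using C by (simp add: seqM_BS Seqs_R)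
  thus ?thesis using h unfolding supB_def by blast
qed

lemma inf_fst: "(\<And>\<alpha>. \<alpha> \<in> A \<Longrightarrow> seqm ({C},{}) \<subseteq> \<alpha>) \<Longrightarrow> seqm ({C},{}) \<subseteq> infB A"
  unfolding infB_def using seqm_Seqs by blast

lemma inf_snd: "(\<And>y. y \<in> Seqs \<Longrightarrow> \<forall>\<alpha>\<in>A. y \<in> \<alpha> \<Longrightarrow> deriv (fst y) (insert C (snd y)))
  \<Longrightarrow> infB A \<subseteq> seqM ({},{C})"
  unfolding infB_def by (auto simp: in_M_R)

lemma seqm_mono:
  assumes C: "C \<in> Fm" and D: "D \<in> Fm"
    and h: "\<And>x. x \<in> Seqs \<Longrightarrow> deriv (insert D (fst x)) (snd x) \<Longrightarrow> deriv (insert C (fst x)) (snd x)"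
  shows "seqm ({C},{}) \<subseteq> seqm ({D},{})"
proof
  fix z assume z: "z \<in> seqm ({C},{})"
  have "z \<in> seqM x" if x: "x \<in> Seqs" "({D},{}) \<in> seqM x" for x
  proof -
    have "deriv (insert C (fst x)) (snd x)" using h x by (simp add: L_in_M)
    thus ?thesis using L_sub[OF C x(1)] z by blast
  qed
  thus "z \<in> seqm ({D},{})" using z seqm_Seqs unfolding seqm_def[of "({D},{})"] by blast
qed



lemma Fm_sub:
  "FNeg F \<in> Fm \<Longrightarrow> F \<in> Fm"
  "FOr F G \<in> Fm \<Longrightarrow> F \<in> Fm" "FOr F G \<in> Fm \<Longrightarrow> G \<in> Fm"
  "FAnd F G \<in> Fm \<Longrightarrow> F \<in> Fm" "FAnd F G \<in> Fm \<Longrightarrow> G \<in> Fm"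
  by (auto simp: Fm_def)

lemma part1: "A \<in> Fm \<Longrightarrow> seqm ({A}, {}) \<in> BS \<and> seqM ({}, {A}) \<in> BS \<and> seqm ({A}, {}) \<subseteq> seqM ({}, {A})"
proof -
  assume A: "A \<in> Fm"
  have "seqm ({A},{}) \<subseteq> seqM ({},{A})"
    by (rule L_sub) (use A deriv_id[of "{}" "{}" A] in \<open>simp_all add: Seqs_R\<close>)
  thus ?thesis using A by (simp add: seqm_BS seqM_BS Seqs_L Seqs_R)
qed

lemma V_neg:
  assumes "FNeg F \<in> Fm"
  shows "seqm ({FNeg F},{}) \<subseteq> negB (seqM ({},{F})) \<and> negB (seqm ({F},{})) \<subseteq> seqM ({},{FNeg F})"
proof
  have F: "F \<in> Fm" using Fm_sub assms by blast
  show "seqm ({FNeg F},{}) \<subseteq> negB (seqM ({},{F}))"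
  proof
    fix z assume z: "z \<in> seqm ({FNeg F},{})"
    have "z \<in> seqM x" if "x \<in> seqM ({},{F})" for x
    proof -
      from that have x: "x \<in> Seqs" "deriv (fst x) (insert F (snd x))" by (simp_all add: in_M_R)
      have "deriv (insert (FNeg F) (fst x)) (snd x)" using r_negL x Seqs_fin[OF x(1)] by blast
      thus ?thesis using L_sub[OF assms x(1)] z by blast
    qed
    thus "z \<in> negB (seqM ({},{F}))" using z seqm_Seqs unfolding negB_def by blast
  qed
  show "negB (seqm ({F},{})) \<subseteq> seqM ({},{FNeg F})"
  proof
    fix y assume y: "y \<in> negB (seqm ({F},{}))"
    have "({F},{}) \<in> seqm ({F},{})" using F by (simp add: seqm_self Seqs_L)
    hence "y \<in> seqM ({F},{})" using y unfolding negB_def by blast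
    hence y2: "y \<in> Seqs" "deriv (insert F (fst y)) (snd y)" by (simp_all add: in_M_L)
    thus "y \<in> seqM ({},{FNeg F})" using r_negR Seqs_fin[OF y2(1)] by (simp add: in_M_R)
  qed
qed

lemma V_or:
  assumes "FOr F0 F1 \<in> Fm"
  shows "seqm ({FOr F0 F1},{}) \<subseteq> supB {seqm ({F0},{}), seqm ({F1},{})}
       \<and> supB {seqM ({},{F0}), seqM ({},{F1})} \<subseteq> seqM ({},{FOr F0 F1})"
proof
  have F: "F0 \<in> Fm" "F1 \<in> Fm" using Fm_sub assms by blast+
  show "seqm ({FOr F0 F1},{}) \<subseteq> supB {seqm ({F0},{}), seqm ({F1},{})}"
  proof (rule sup_fst[OF assms])
    fix x assume x: "x \<in> Seqs" "\<forall>\<alpha>\<in>{seqm ({F0},{}), seqm ({F1},{})}. \<alpha> \<subseteq> seqM x"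
    have "deriv (insert F0 (fst x)) (snd x)" "deriv (insert F1 (fst x)) (snd x)"
      using x(2) L_subD F by auto
    thus "deriv (insert (FOr F0 F1) (fst x)) (snd x)" using r_orL Seqs_fin[OF x(1)] by blast
  qed
  show "supB {seqM ({},{F0}), seqM ({},{F1})} \<subseteq> seqM ({},{FOr F0 F1})"
    by (rule sup_snd[OF assms]) (auto simp: in_M_R Seqs_def intro: r_orR0 r_orR1)
qed

lemma V_and:
  assumes "FAnd F0 F1 \<in> Fm"
  shows "seqm ({FAnd F0 F1},{}) \<subseteq> infB {seqm ({F0},{}), seqm ({F1},{})}
       \<and> infB {seqM ({},{F0}), seqM ({},{F1})} \<subseteq> seqM ({},{FAnd F0 F1})"
proof
  have F: "F0 \<in> Fm" "F1 \<in> Fm" using Fm_sub assms by blast+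
  show "seqm ({FAnd F0 F1},{}) \<subseteq> infB {seqm ({F0},{}), seqm ({F1},{})}"
  proof (rule inf_fst)
    fix \<alpha> assume "\<alpha> \<in> {seqm ({F0},{}), seqm ({F1},{})}"
    moreover have "seqm ({FAnd F0 F1},{}) \<subseteq> seqm ({F0},{})"
      by (rule seqm_mono[OF assms F(1)]) (auto simp: Seqs_def intro: r_andL0)
    moreover have "seqm ({FAnd F0 F1},{}) \<subseteq> seqm ({F1},{})"
      by (rule seqm_mono[OF assms F(2)]) (auto simp: Seqs_def intro: r_andL1)
    ultimately show "seqm ({FAnd F0 F1},{}) \<subseteq> \<alpha>" by blast
  qed
  show "infB {seqM ({},{F0}), seqM ({},{F1})} \<subseteq> seqM ({},{FAnd F0 F1})"
    by (rule inf_snd) (auto simp: in_M_R Seqs_def intro: r_andR)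
qed



lemma V_ex:
  assumes A: "FEx F \<in> Fm"
  shows "seqm ({FEx F},{}) \<subseteq> supB (fst ` {(seqm ({open1 0 t F},{}), seqM ({},{open1 0 t F})) |t. t \<in> Tm0})
       \<and> supB (snd ` {(seqm ({open1 0 t F},{}), seqM ({},{open1 0 t F})) |t. t \<in> Tm0}) \<subseteq> seqM ({},{FEx F})"
proof
  show "seqm ({FEx F},{}) \<subseteq> supB (fst ` {(seqm ({open1 0 t F},{}), seqM ({},{open1 0 t F})) |t. t \<in> Tm0})"
  proof (rule sup_fst[OF A])
    fix x assume x: "x \<in> Seqs" "\<forall>\<alpha>\<in>fst ` {(seqm ({open1 0 t F},{}), seqM ({},{open1 0 t F})) |t. t \<in> Tm0}. \<alpha> \<subseteq> seqM x"
    have "deriv (insert (open1 0 t F) (fst x)) (snd x)" if t: "t \<in> Tm0" for t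
    proof -
      have "seqm ({open1 0 t F},{}) \<in> fst ` {(seqm ({open1 0 t F},{}), seqM ({},{open1 0 t F})) |t. t \<in> Tm0}"
        by (rule image_eqI[where x="(seqm ({open1 0 t F},{}), seqM ({},{open1 0 t F}))"]) (use t in auto)
      hence "seqm ({open1 0 t F},{}) \<subseteq> seqM x" by (rule bspec[OF x(2)])
      thus ?thesis by (rule L_subD[OF Fm_open1[OF disjI1[OF A] t]])
    qed
    thus "deriv (insert (FEx F) (fst x)) (snd x)" using Seqs_fin[OF x(1)] by (intro r_exL) auto
  qed
  show "supB (snd ` {(seqm ({open1 0 t F},{}), seqM ({},{open1 0 t F})) |t. t \<in> Tm0}) \<subseteq> seqM ({},{FEx F})"
  proof (rule sup_snd[OF A])
    fix \<alpha> assume "\<alpha> \<in> snd ` {(seqm ({open1 0 t F},{}), seqM ({},{open1 0 t F})) |t. t \<in> Tm0}"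
    then obtain t where t: "t \<in> Tm0" "\<alpha> = seqM ({},{open1 0 t F})" by auto
    show "\<alpha> \<subseteq> seqM ({},{FEx F})" using t by (auto simp: in_M_R Seqs_def intro: r_exR)
  qed
qed

lemma V_all:
  assumes A: "FAll F \<in> Fm"
  shows "seqm ({FAll F},{}) \<subseteq> infB (fst ` {(seqm ({open1 0 t F},{}), seqM ({},{open1 0 t F})) |t. t \<in> Tm0})
       \<and> infB (snd ` {(seqm ({open1 0 t F},{}), seqM ({},{open1 0 t F})) |t. t \<in> Tm0}) \<subseteq> seqM ({},{FAll F})"
proof
  show "seqm ({FAll F},{}) \<subseteq> infB (fst ` {(seqm ({open1 0 t F},{}), seqM ({},{open1 0 t F})) |t. t \<in> Tm0})"
  proof (rule inf_fst)
    fix \<alpha> assume "\<alpha> \<in> fst ` {(seqm ({open1 0 t F},{}), seqM ({},{open1 0 t F})) |t. t \<in> Tm0}"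
    then obtain t where t: "t \<in> Tm0" "\<alpha> = seqm ({open1 0 t F},{})" by auto
    have "seqm ({FAll F},{}) \<subseteq> seqm ({open1 0 t F},{})"
      by (rule seqm_mono[OF A Fm_open1[OF disjI2[OF A] t(1)]]) (use A t in \<open>auto simp: Seqs_def intro: r_allL\<close>)
    thus "seqm ({FAll F},{}) \<subseteq> \<alpha>" using t by simp
  qed
  show "infB (snd ` {(seqm ({open1 0 t F},{}), seqM ({},{open1 0 t F})) |t. t \<in> Tm0}) \<subseteq> seqM ({},{FAll F})"
  proof (rule inf_snd)
    fix y assume y: "y \<in> Seqs" "\<forall>\<alpha>\<in>snd ` {(seqm ({open1 0 t F},{}), seqM ({},{open1 0 t F})) |t. t \<in> Tm0}. y \<in> \<alpha>"
    have "deriv (fst y) (insert (open1 0 t F) (snd y))" if t: "t \<in> Tm0" for t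
    proof -
      have "seqM ({},{open1 0 t F}) \<in> snd ` {(seqm ({open1 0 t F},{}), seqM ({},{open1 0 t F})) |t. t \<in> Tm0}"
        by (rule image_eqI[where x="(seqm ({open1 0 t F},{}), seqM ({},{open1 0 t F}))"]) (use t in auto)
      hence "y \<in> seqM ({},{open1 0 t F})" by (rule bspec[OF y(2)])
      thus ?thesis by (simp add: in_M_R)
    qed
    thus "deriv (fst y) (insert (FAll F) (snd y))" using Seqs_fin[OF y(1)] by (intro r_allR) auto
  qed
qed

lemma V_ex2:
  assumes A: "FEx2 n F \<in> Fm"
  shows "seqm ({FEx2 n F},{}) \<subseteq> supB (fst ` {(seqm ({open2 0 T F},{}), seqM ({},{open2 0 T F})) |T. T \<in> Abs n})
       \<and> supB (snd ` {(seqm ({open2 0 T F},{}), seqM ({},{open2 0 T F})) |T. T \<in> Abs n}) \<subseteq> seqM ({},{FEx2 n F})"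
proof
  show "seqm ({FEx2 n F},{}) \<subseteq> supB (fst ` {(seqm ({open2 0 T F},{}), seqM ({},{open2 0 T F})) |T. T \<in> Abs n})"
  proof (rule sup_fst[OF A])
    fix x assume x: "x \<in> Seqs" "\<forall>\<alpha>\<in>fst ` {(seqm ({open2 0 T F},{}), seqM ({},{open2 0 T F})) |T. T \<in> Abs n}. \<alpha> \<subseteq> seqM x"
    have "deriv (insert (open2 0 T F) (fst x)) (snd x)" if t: "T \<in> Abs n" for T
    proof -
      have "seqm ({open2 0 T F},{}) \<in> fst ` {(seqm ({open2 0 T F},{}), seqM ({},{open2 0 T F})) |T. T \<in> Abs n}"
        by (rule image_eqI[where x="(seqm ({open2 0 T F},{}), seqM ({},{open2 0 T F}))"]) (use t in auto)
      hence "seqm ({open2 0 T F},{}) \<subseteq> seqM x" by (rule bspec[OF x(2)])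
      thus ?thesis by (rule L_subD[OF Fm_open2[OF disjI1[OF A] t]])
    qed
    thus "deriv (insert (FEx2 n F) (fst x)) (snd x)" using Seqs_fin[OF x(1)] by (intro r_ex2L) auto
  qed
  show "supB (snd ` {(seqm ({open2 0 T F},{}), seqM ({},{open2 0 T F})) |T. T \<in> Abs n}) \<subseteq> seqM ({},{FEx2 n F})"
  proof (rule sup_snd[OF A])
    fix \<alpha> assume "\<alpha> \<in> snd ` {(seqm ({open2 0 T F},{}), seqM ({},{open2 0 T F})) |T. T \<in> Abs n}"
    then obtain T where t: "T \<in> Abs n" "\<alpha> = seqM ({},{open2 0 T F})" by auto
    show "\<alpha> \<subseteq> seqM ({},{FEx2 n F})" using t by (auto simp: in_M_R Seqs_def intro: r_ex2R)
  qed
qed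

lemma V_all2:
  assumes A: "FAll2 n F \<in> Fm"
  shows "seqm ({FAll2 n F},{}) \<subseteq> infB (fst ` {(seqm ({open2 0 T F},{}), seqM ({},{open2 0 T F})) |T. T \<in> Abs n})
       \<and> infB (snd ` {(seqm ({open2 0 T F},{}), seqM ({},{open2 0 T F})) |T. T \<in> Abs n}) \<subseteq> seqM ({},{FAll2 n F})"
proof
  show "seqm ({FAll2 n F},{}) \<subseteq> infB (fst ` {(seqm ({open2 0 T F},{}), seqM ({},{open2 0 T F})) |T. T \<in> Abs n})"
  proof (rule inf_fst)
    fix \<alpha> assume "\<alpha> \<in> fst ` {(seqm ({open2 0 T F},{}), seqM ({},{open2 0 T F})) |T. T \<in> Abs n}"
    then obtain T where t: "T \<in> Abs n" "\<alpha> = seqm ({open2 0 T F},{})" by auto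
    have "seqm ({FAll2 n F},{}) \<subseteq> seqm ({open2 0 T F},{})"
      by (rule seqm_mono[OF A Fm_open2[OF disjI2[OF A] t(1)]]) (use A t in \<open>auto simp: Seqs_def intro: r_all2L\<close>)
    thus "seqm ({FAll2 n F},{}) \<subseteq> \<alpha>" using t by simp
  qed
  show "infB (snd ` {(seqm ({open2 0 T F},{}), seqM ({},{open2 0 T F})) |T. T \<in> Abs n}) \<subseteq> seqM ({},{FAll2 n F})"
  proof (rule inf_snd)
    fix y assume y: "y \<in> Seqs" "\<forall>\<alpha>\<in>snd ` {(seqm ({open2 0 T F},{}), seqM ({},{open2 0 T F})) |T. T \<in> Abs n}. y \<in> \<alpha>"
    have "deriv (fst y) (insert (open2 0 T F) (snd y))" if t: "T \<in> Abs n" for T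
    proof -
      have "seqM ({},{open2 0 T F}) \<in> snd ` {(seqm ({open2 0 T F},{}), seqM ({},{open2 0 T F})) |T. T \<in> Abs n}"
        by (rule image_eqI[where x="(seqm ({open2 0 T F},{}), seqM ({},{open2 0 T F}))"]) (use t in auto)
      hence "y \<in> seqM ({},{open2 0 T F})" by (rule bspec[OF y(2)])
      thus ?thesis by (simp add: in_M_R)
    qed
    thus "deriv (fst y) (insert (FAll2 n F) (snd y))" using Seqs_fin[OF y(1)] by (intro r_all2R) auto
  qed
qed



theorem mainTheorem12:
  shows "(\<forall>A\<in>Fm. seqm ({A}, {}) \<in> BS \<and> seqM ({}, {A}) \<in> BS
                \<and> seqm ({A}, {}) \<subseteq> seqM ({}, {A}))
       \<and> semi_valuation (\<lambda>A. (seqm ({A}, {}), seqM ({}, {A})))"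
proof
  show "\<forall>A\<in>Fm. seqm ({A}, {}) \<in> BS \<and> seqM ({}, {A}) \<in> BS \<and> seqm ({A}, {}) \<subseteq> seqM ({}, {A})"
    using part1 by blast
  show "semi_valuation (\<lambda>A. (seqm ({A}, {}), seqM ({}, {A})))"
    unfolding semi_valuation_def dle_def dneg_def dsup_def dinf_def fst_conv snd_conv
    using part1 V_neg V_or V_and V_ex V_all V_ex2 V_all2
    by (simp add: DBS_def)
qed


end
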